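(* Let $\mathbf m_1,\mathbf m_2,\mathbf m_3\in\mathbb R^3$ and $t_1,t_2,t_3\in\mathbb R$ with $\mathbf m_1\neq 0$, $\mathbf m_1\cdot\mathbf m_3=0$, and $\mathbf m_2,\mathbf m_3$ linearly independent, and let $$\mathbf A_1=\begin{bmatrix}\mathbf m_1^T & t_1\\ \mathbf 0^T & 1\end{bmatrix},\qquad \mathbf A_2=\begin{bmatrix}\mathbf m_2^T & t_2\\ \mathbf m_3^T & t_3\end{bmatrix}.$$ Then there exist unique reals $v>0$, $f>0$, $u$, unique unit vectors $\mathbf r_1,\mathbf r_2,\mathbf r_3\in\mathbb R^3$ with $\mathbf r_3\cdot\mathbf r_1=\mathbf r_3\cdot\mathbf r_2=0$, unique reals $t_1',t_2',t_3'$, and a unique scalar $c>0$ such that $$\mathbf A_1=\mathbf K_1\begin{bmatrix}\mathbf r_1^T & t_1'\\ \mathbf 0^T & 1\end{bmatrix},\qquad \mathbf A_2=c\,\mathbf K_2\begin{bmatrix}\mathbf r_2^T & t_2'\\ \mathbf r_3^T & t_3'\end{bmatrix},\qquad \mathbf K_1=\begin{bmatrix}1/v&0\\0&1\end{bmatrix},\ \mathbf K_2=\begin{bmatrix}f&u\\0&1\end{bmatrix}.$$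
   Context: A pair $(\mathbf A_1,\mathbf A_2)$ of $2\times4$ matrices represents the camera $\mathbf x\mapsto\big(\mathbf a_1^T\mathbf x/\mathbf a_2^T\mathbf x,\ \mathbf b_1^T\mathbf x/\mathbf b_2^T\mathbf x,\ 1\big)$ with $\mathbf a_i$, $\mathbf b_i$ the rows of $\mathbf A_1$, $\mathbf A_2$; when the second row of $\mathbf A_1$ is $(0,0,0,1)$ one slit (the null space of $\mathbf A_1$) lies in the plane at infinity, and the camera is called a (linear) pushbroom camera. *)

theory Defs
  imports "HOL-Analysis.Analysis"
begin

definition row4 :: "real^3 \<Rightarrow> real \<Rightarrow> real^4" where
  "row4 m t = vector [m$1, m$2, m$3, t]"

definition mat24 :: "real^4 \<Rightarrow> real^4 \<Rightarrow> real^4^2" where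
  "mat24 a b = vector [a, b]"

definition mat22 :: "real \<Rightarrow> real \<Rightarrow> real \<Rightarrow> real \<Rightarrow> real^2^2" where
  "mat22 a b c d = vector [vector [a, b], vector [c, d]]"

end

theory Submission
  imports Defs
begin

lemma row4_nth[simp]: "row4 m t $ 1 = m$1" "row4 m t $ 2 = m$2" "row4 m t $ 3 = m$3" "row4 m t $ 4 = t"
  unfolding row4_def vector_def by simp_all

lemma row4_eq: "row4 m t = row4 m' t' \<longleftrightarrow> m = m' \<and> t = t'"
  by (auto simp: vec_eq_iff forall_4 forall_3)

lemma mat24_nth[simp]: "mat24 x y $ 1 = x" "mat24 x y $ 2 = y"
  unfolding mat24_def by simp_all

lemma mat24_eq: "mat24 x y = mat24 x' y' \<longleftrightarrow> x = x' \<and> y = y'"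
  by (auto simp: vec_eq_iff forall_2)

lemma mat22_nth[simp]: "mat22 a b c d $ 1 $ 1 = a" "mat22 a b c d $ 1 $ 2 = b"
   "mat22 a b c d $ 2 $ 1 = c" "mat22 a b c d $ 2 $ 2 = d"
  unfolding mat22_def by simp_all

lemma prod22: "mat22 a b c d ** mat24 x y = mat24 (a *\<^sub>R x + b *\<^sub>R y) (c *\<^sub>R x + d *\<^sub>R y)"
  by (simp add: vec_eq_iff forall_2 matrix_matrix_mult_def sum_2)

lemma row4_comb: "a *\<^sub>R row4 m s + b *\<^sub>R row4 q w = row4 (a *\<^sub>R m + b *\<^sub>R q) (a * s + b * w)"
  by (simp add: vec_eq_iff forall_4)

lemma row4_scale: "a *\<^sub>R row4 m s = row4 (a *\<^sub>R m) (a * s)"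
  by (simp add: vec_eq_iff forall_4)

lemma mat24_scale: "a *\<^sub>R mat24 x y = mat24 (a *\<^sub>R x) (a *\<^sub>R y)"
  by (simp add: vec_eq_iff forall_2)


lemma prodrow: "mat22 a b c d ** mat24 (row4 r s) (row4 q w) =
  mat24 (row4 (a *\<^sub>R r + b *\<^sub>R q) (a * s + b * w)) (row4 (c *\<^sub>R r + d *\<^sub>R q) (c * s + d * w))"
  by (simp add: vec_eq_iff forall_2 forall_4 matrix_matrix_mult_def sum_2)

lemma scalerow: "k *\<^sub>R mat24 (row4 r s) (row4 q w) = mat24 (row4 (k *\<^sub>R r) (k * s)) (row4 (k *\<^sub>R q) (k * w))"
  by (simp add: vec_eq_iff forall_2 forall_4)

theorem mainTheorem3:
  fixes m1 m2 m3 :: "real^3" and t1 t2 t3 :: real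
  assumes "m1 \<noteq> 0" and "m1 \<bullet> m3 = 0" and "independent {m2, m3}" and "m2 \<noteq> m3"
  defines "A1 \<equiv> mat24 (row4 m1 t1) (row4 0 1)"
      and "A2 \<equiv> mat24 (row4 m2 t2) (row4 m3 t3)"
  shows "\<exists>!p :: real \<times> real \<times> real \<times> (real^3) \<times> (real^3) \<times> (real^3) \<times> real \<times> real \<times> real \<times> real.
           case p of (v, f, u, r1, r2, r3, t1', t2', t3', c) \<Rightarrow>
             v > 0 \<and> f > 0 \<and> norm r1 = 1 \<and> norm r2 = 1 \<and> norm r3 = 1 \<and>
             r3 \<bullet> r1 = 0 \<and> r3 \<bullet> r2 = 0 \<and> c > 0 \<and>
             A1 = mat22 (1 / v) 0 0 1 ** mat24 (row4 r1 t1') (row4 0 1) \<and>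
             A2 = c *\<^sub>R (mat22 f u 0 1 ** mat24 (row4 r2 t2') (row4 r3 t3'))"
proof -
  let ?P = "\<lambda>p :: real \<times> real \<times> real \<times> (real^3) \<times> (real^3) \<times> (real^3) \<times> real \<times> real \<times> real \<times> real.
           case p of (v, f, u, r1, r2, r3, t1', t2', t3', c) \<Rightarrow>
             v > 0 \<and> f > 0 \<and> norm r1 = 1 \<and> norm r2 = 1 \<and> norm r3 = 1 \<and>
             r3 \<bullet> r1 = 0 \<and> r3 \<bullet> r2 = 0 \<and> c > 0 \<and>
             A1 = mat22 (1 / v) 0 0 1 ** mat24 (row4 r1 t1') (row4 0 1) \<and>
             A2 = c *\<^sub>R (mat22 f u 0 1 ** mat24 (row4 r2 t2') (row4 r3 t3'))"
  have Peq: "?P (v, f, u, r1, r2, r3, t1', t2', t3', c) \<longleftrightarrow>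
      v > 0 \<and> f > 0 \<and> norm r1 = 1 \<and> norm r2 = 1 \<and> norm r3 = 1 \<and>
             r3 \<bullet> r1 = 0 \<and> r3 \<bullet> r2 = 0 \<and> c > 0 \<and>
      m1 = (1/v) *\<^sub>R r1 \<and> t1 = t1' / v \<and>
      m2 = (c*f) *\<^sub>R r2 + (c*u) *\<^sub>R r3 \<and> t2 = c * (f * t2' + u * t3') \<and>
      m3 = c *\<^sub>R r3 \<and> t3 = c * t3'" for v f u r1 r2 r3 t1' t2' t3' c
    unfolding A1_def A2_def prodrow scalerow mat24_eq row4_eq
    by (auto simp: algebra_simps)
  have m3nz: "m3 \<noteq> 0"
    using assms(3) dependent_zero by blast
  have notpar: "m2 \<noteq> k *\<^sub>R m3" for k
  proof
    assume "m2 = k *\<^sub>R m3"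
    then have "m2 \<in> span {m3}" by (simp add: span_base span_scale)
    then show False using assms(3,4) by (simp add: independent_insert)
  qed
  define c where "c = norm m3"
  define r3 where "r3 = (1/c) *\<^sub>R m3"
  define t3' where "t3' = t3 / c"
  define v where "v = 1 / norm m1"
  define r1 where "r1 = v *\<^sub>R m1"
  define t1' where "t1' = v * t1"
  define u where "u = (m2 \<bullet> r3) / c"
  define w where "w = (1/c) *\<^sub>R m2 - u *\<^sub>R r3"
  define f where "f = norm w"
  define r2 where "r2 = (1/f) *\<^sub>R w"
  define t2' where "t2' = (t2 / c - u * t3') / f"
  have cpos: "c > 0" using m3nz c_def by simp
  have vpos: "v > 0" using assms(1) v_def by simp
  have wnz: "w \<noteq> 0"
  proof
    assume "w = 0"
    then have h: "(1/c) *\<^sub>R m2 = (u/c) *\<^sub>R m3" using cpos unfolding w_def r3_def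
      by (simp add: algebra_simps)
    have "m2 = c *\<^sub>R ((1/c) *\<^sub>R m2)" using cpos by simp
    also have "\<dots> = c *\<^sub>R ((u/c) *\<^sub>R m3)" using h by simp
    also have "\<dots> = u *\<^sub>R m3" using cpos by simp
    finally have "m2 = u *\<^sub>R m3" .
    then show False using notpar by blast
  qed
  have fpos: "f > 0" using wnz f_def by simp
  have nr3: "norm r3 = 1" using cpos c_def r3_def by simp
  have nr1: "norm r1 = 1" using assms(1) r1_def v_def by simp
  have nr2: "norm r2 = 1" using fpos f_def r2_def by simp
  have r31: "r3 \<bullet> r1 = 0" using assms(2) r3_def r1_def by (simp add: inner_commute)
  have r33: "r3 \<bullet> r3 = 1" using nr3 by (simp add: dot_square_norm)
  have r3w: "r3 \<bullet> w = 0" using cpos unfolding w_def u_def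
    by (simp add: inner_diff_right r33 inner_commute)
  have r32: "r3 \<bullet> r2 = 0" using r3w r2_def by simp
  have e1: "m1 = (1/v) *\<^sub>R r1" using vpos r1_def by simp
  have e2: "t1 = t1' / v" using vpos t1'_def by simp
  have e3: "m3 = c *\<^sub>R r3" using cpos r3_def by simp
  have e4: "t3 = c * t3'" using cpos t3'_def by simp
  have e5: "m2 = (c*f) *\<^sub>R r2 + (c*u) *\<^sub>R r3"
  proof -
    have "(c*f) *\<^sub>R r2 = c *\<^sub>R w" using fpos r2_def by simp
    also have "\<dots> = c *\<^sub>R ((1/c) *\<^sub>R m2) - c *\<^sub>R (u *\<^sub>R r3)"
      unfolding w_def by (rule scaleR_diff_right)
    also have "\<dots> = m2 - (c*u) *\<^sub>R r3" using cpos by simp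
    finally show ?thesis by simp
  qed
  have e6: "t2 = c * (f * t2' + u * t3')" using cpos fpos t2'_def by (simp add: field_simps)
  have ex: "?P (v, f, u, r1, r2, r3, t1', t2', t3', c)"
    unfolding Peq using vpos fpos nr1 nr2 nr3 r31 r32 cpos e1 e2 e3 e4 e5 e6 by blast
  have un: "p = (v, f, u, r1, r2, r3, t1', t2', t3', c)" if "?P p" for p
  proof -
    obtain v' f' u' r1' r2' r3' t1'' t2'' t3'' c' where
      p: "p = (v', f', u', r1', r2', r3', t1'', t2'', t3'', c')" by (cases p) auto
    from that have H: "v' > 0 \<and> f' > 0 \<and> norm r1' = 1 \<and> norm r2' = 1 \<and> norm r3' = 1 \<and>
             r3' \<bullet> r1' = 0 \<and> r3' \<bullet> r2' = 0 \<and> c' > 0 \<and>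
      m1 = (1/v') *\<^sub>R r1' \<and> t1 = t1'' / v' \<and>
      m2 = (c'*f') *\<^sub>R r2' + (c'*u') *\<^sub>R r3' \<and> t2 = c' * (f' * t2'' + u' * t3'') \<and>
      m3 = c' *\<^sub>R r3' \<and> t3 = c' * t3''" unfolding p Peq by blast
    have "c' = c" using H c_def by simp
    then have hc: "c' = c" .
    have hr3: "r3' = r3" using H hc cpos r3_def by simp
    have ht3: "t3'' = t3'" using H hc cpos t3'_def by simp
    have hv: "v' = v" using H v_def by simp
    have hr1: "r1' = r1" using H hv r1_def by simp
    have ht1: "t1'' = t1'" using H hv t1'_def by simp
    have r33': "r3' \<bullet> r3' = 1" using H by (simp add: dot_square_norm)
    have a: "m2 \<bullet> r3' = (c'*f')*(r2' \<bullet> r3') + (c'*u')*(r3' \<bullet> r3')"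
      using H by (simp add: inner_add_left)
    have b: "r2' \<bullet> r3' = 0" using H by (simp add: inner_commute)
    have "m2 \<bullet> r3 = c' * u'" using a b r33' hr3 by simp
    then have hu: "u' = u" using hc cpos u_def by simp
    have "w = f' *\<^sub>R r2'" using H hc hu hr3 cpos unfolding w_def by (simp add: algebra_simps)
    then have hf: "f' = f" using H f_def by simp
    have hr2: "r2' = r2" using H hf fpos r2_def \<open>w = f' *\<^sub>R r2'\<close> by simp
    have ht2: "t2'' = t2'" using H hc hu ht3 hf cpos fpos t2'_def by (simp add: field_simps)
    show ?thesis using p hc hr3 ht3 hv hr1 ht1 hu hf hr2 ht2 by simp
  qed
  show ?thesis
    apply (rule ex1I[of _ "(v, f, u, r1, r2, r3, t1', t2', t3', c)"])
     apply (fact ex)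
    apply (erule un)
    done
qed

end
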